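(* In the setting below, there exist $K>0$ and $\hat\beta>0$ such that for all $\beta<\hat\beta$, $D,h\in\mathbb{R}$ and $N\ge2$, \[|p-p_-|\le\frac KN,\qquad |q-q_-|\le\frac KN.\]
   Context: Fix $S\ge1$ and let $X$ be standard Gaussian. For $b\ge0$ consider the system in $(p,q)$ $p=\mathbb{E}\big[\frac{\sum_{\gamma=1}^{S}\gamma^2\, 2\cosh[\gamma(\sqrt{q}bX+h)]e^{\gamma^2[D+\frac{b^2}{2}(p-q)]}}{1+\sum_{\gamma=1}^{S}2\cosh[\gamma(\sqrt{q}bX+h)]e^{\gamma^2[D+\frac{b^2}{2}(p-q)]}}\big]$, $q=\mathbb{E}\big[\big(\frac{\sum_{\gamma=1}^{S}\gamma\, 2\sinh[\gamma(\sqrt{q}bX+h)]e^{\gamma^2[D+\frac{b^2}{2}(p-q)]}}{1+\sum_{\gamma=1}^{S}2\cosh[\gamma(\sqrt{q}bX+h)]e^{\gamma^2[D+\frac{b^2}{2}(p-q)]}}\big)^2\big]$, which for $b$ below some threshold $\tilde\beta>0$ has a unique solution; $\beta<\tilde\beta$ is assumed. Let $(p,q)$ be the solution with $b=\beta$, let $\beta_-=\beta\sqrt{(N-1)/N}$ (so $\beta_-/\sqrt{N-1}=\beta/\sqrt N$), and let $(p_-,q_-)$ be the solution with $b=\beta_-$. *)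

theory Defs
  imports "HOL-Probability.Probability"
begin

definition gauss_exp :: "(real \<Rightarrow> real) \<Rightarrow> real" where
  "gauss_exp f = (\<integral>x. std_normal_density x * f x \<partial>lborel)"

definition wgt :: "real \<Rightarrow> real \<Rightarrow> real \<Rightarrow> real \<Rightarrow> nat \<Rightarrow> real" where
  "wgt D b p q g = exp ((real g)^2 * (D + b^2 / 2 * (p - q)))"

definition Zden :: "nat \<Rightarrow> real \<Rightarrow> real \<Rightarrow> real \<Rightarrow> real \<Rightarrow> real \<Rightarrow> real \<Rightarrow> real" where
  "Zden S D h b p q x = 1 + (\<Sum>g=1..S. 2 * cosh (real g * (sqrt q * b * x + h)) * wgt D b p q g)"

definition Pnum :: "nat \<Rightarrow> real \<Rightarrow> real \<Rightarrow> real \<Rightarrow> real \<Rightarrow> real \<Rightarrow> real \<Rightarrow> real" where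
  "Pnum S D h b p q x = (\<Sum>g=1..S. (real g)^2 * (2 * cosh (real g * (sqrt q * b * x + h))) * wgt D b p q g)"

definition Qnum :: "nat \<Rightarrow> real \<Rightarrow> real \<Rightarrow> real \<Rightarrow> real \<Rightarrow> real \<Rightarrow> real \<Rightarrow> real" where
  "Qnum S D h b p q x = (\<Sum>g=1..S. real g * (2 * sinh (real g * (sqrt q * b * x + h))) * wgt D b p q g)"

definition is_solution :: "nat \<Rightarrow> real \<Rightarrow> real \<Rightarrow> real \<Rightarrow> real \<Rightarrow> real \<Rightarrow> bool" where
  "is_solution S D h b p q \<longleftrightarrow>
     p = gauss_exp (\<lambda>x. Pnum S D h b p q x / Zden S D h b p q x) \<and>
     q = gauss_exp (\<lambda>x. (Qnum S D h b p q x / Zden S D h b p q x)^2)"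

end

theory Submission
  imports Defs
begin


definition A :: "nat \<Rightarrow> nat \<Rightarrow> real \<Rightarrow> real \<Rightarrow> real" where
  "A S k t e = (if k = 0 then 1 else 0) +
     (\<Sum>g=1..S. real g ^ k * (exp (real g * t) + (-1)^k * exp (-(real g * t))) * exp ((real g)^2 * e))"

lemma term_deriv_t: "((\<lambda>t. real g ^ k * (exp (real g * t) + (-1)^k * exp (-(real g * t))) * exp ((real g)^2 * e))
   has_real_derivative (real g ^ Suc k * (exp (real g * t) + (-1)^Suc k * exp (-(real g * t))) * exp ((real g)^2 * e))) (at t)"
proof -
  have "((\<lambda>t. real g ^ k * (exp (real g * t) + (-1)^k * exp (-(real g * t))) * exp ((real g)^2 * e))
   has_real_derivative (real g ^ k * (exp (real g * t) * real g + (-1)^k * (exp (-(real g * t)) * (- real g))) * exp ((real g)^2 * e))) (at t)"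
    by (intro derivative_eq_intros refl) auto
  then show ?thesis by (rule DERIV_cong) (simp add: algebra_simps)
qed

lemma term_deriv_e: "((\<lambda>e. real g ^ k * (exp (real g * t) + (-1)^k * exp (-(real g * t))) * exp ((real g)^2 * e))
   has_real_derivative (real g ^ Suc (Suc k) * (exp (real g * t) + (-1)^Suc (Suc k) * exp (-(real g * t))) * exp ((real g)^2 * e))) (at e)"
proof -
  have "((\<lambda>e. real g ^ k * (exp (real g * t) + (-1)^k * exp (-(real g * t))) * exp ((real g)^2 * e))
   has_real_derivative (real g ^ k * (exp (real g * t) + (-1)^k * exp (-(real g * t))) * (exp ((real g)^2 * e) * ((real g)^2 * 1)))) (at e)"
    by (intro derivative_eq_intros refl) auto
  then show ?thesis by (rule DERIV_cong) (simp add: algebra_simps power2_eq_square)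
qed

lemma A_deriv_t: "((\<lambda>t. A S k t e) has_real_derivative A S (Suc k) t e) (at t)"
proof -
  have "((\<lambda>t. (if k = 0 then 1 else 0) + (\<Sum>g=1..S. real g ^ k * (exp (real g * t) + (-1)^k * exp (-(real g * t))) * exp ((real g)^2 * e)))
     has_real_derivative 0 + (\<Sum>g=1..S. real g ^ Suc k * (exp (real g * t) + (-1)^Suc k * exp (-(real g * t))) * exp ((real g)^2 * e))) (at t)"
    by (intro DERIV_add DERIV_const DERIV_sum term_deriv_t)
  then show ?thesis unfolding A_def by simp
qed

lemma A_deriv_e: "((\<lambda>e. A S k t e) has_real_derivative A S (Suc (Suc k)) t e) (at e)"
proof -
  have "((\<lambda>e. (if k = 0 then 1 else 0) + (\<Sum>g=1..S. real g ^ k * (exp (real g * t) + (-1)^k * exp (-(real g * t))) * exp ((real g)^2 * e)))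
     has_real_derivative 0 + (\<Sum>g=1..S. real g ^ Suc (Suc k) * (exp (real g * t) + (-1)^Suc (Suc k) * exp (-(real g * t))) * exp ((real g)^2 * e))) (at e)"
    by (intro DERIV_add DERIV_const DERIV_sum term_deriv_e)
  then show ?thesis unfolding A_def by simp
qed

lemma A0_ge1: "A S 0 t e \<ge> 1"
  unfolding A_def by (auto intro!: sum_nonneg add_nonneg_nonneg)

lemma A_bound: "\<bar>A S k t e\<bar> \<le> real S ^ k * A S 0 t e"
proof (cases "k = 0")
  case True then show ?thesis using A0_ge1[of S t e] by simp
next
  case False
  have "\<bar>A S k t e\<bar> = \<bar>\<Sum>g=1..S. real g ^ k * (exp (real g * t) + (-1)^k * exp (-(real g * t))) * exp ((real g)^2 * e)\<bar>"
    using False unfolding A_def by simp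
  also have "\<dots> \<le> (\<Sum>g=1..S. \<bar>real g ^ k * (exp (real g * t) + (-1)^k * exp (-(real g * t))) * exp ((real g)^2 * e)\<bar>)"
    by (rule sum_abs)
  also have "\<dots> \<le> (\<Sum>g=1..S. real S ^ k * ((exp (real g * t) + exp (-(real g * t))) * exp ((real g)^2 * e)))"
  proof (rule sum_mono)
    fix g assume g: "g \<in> {1..S}"
    have a: "\<bar>exp (real g * t) + (-1)^k * exp (-(real g * t))\<bar> \<le> exp (real g * t) + exp (-(real g * t))"
      using exp_gt_zero[of "real g * t"] exp_gt_zero[of "-(real g*t)"]
      by (cases "even k") (auto simp: abs_le_iff)
    have b: "real g ^ k \<le> real S ^ k" using g by (auto intro!: power_mono)
    have "\<bar>real g ^ k * (exp (real g * t) + (-1)^k * exp (-(real g * t))) * exp ((real g)^2 * e)\<bar>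
       = real g ^ k * \<bar>exp (real g * t) + (-1)^k * exp (-(real g * t))\<bar> * exp ((real g)^2 * e)"
      by (simp add: abs_mult)
    also have "\<dots> \<le> real S ^ k * (exp (real g * t) + exp (-(real g * t))) * exp ((real g)^2 * e)"
      by (intro mult_right_mono mult_mono a b) auto
    finally show "\<bar>real g ^ k * (exp (real g * t) + (-1)^k * exp (-(real g * t))) * exp ((real g)^2 * e)\<bar>
       \<le> real S ^ k * ((exp (real g * t) + exp (-(real g * t))) * exp ((real g)^2 * e))" by simp
  qed
  also have "\<dots> = real S ^ k * (\<Sum>g=1..S. (exp (real g * t) + exp (-(real g * t))) * exp ((real g)^2 * e))"
    by (simp add: sum_distrib_left)
  also have "\<dots> \<le> real S ^ k * A S 0 t e"
    unfolding A_def by (intro mult_left_mono) auto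
  finally show ?thesis .
qed

definition m :: "nat \<Rightarrow> nat \<Rightarrow> real \<Rightarrow> real \<Rightarrow> real" where
  "m S k t e = A S k t e / A S 0 t e"

lemma m_bound: "\<bar>m S k t e\<bar> \<le> real S ^ k"
proof -
  have p: "A S 0 t e > 0" using A0_ge1[of S t e] by simp
  show ?thesis unfolding m_def using A_bound[of S k t e] p
    by (simp add: abs_div pos_divide_le_eq)
qed

lemma m_deriv_t: "((\<lambda>t. m S k t e) has_real_derivative (m S (Suc k) t e - m S k t e * m S 1 t e)) (at t)"
proof -
  have p: "A S 0 t e \<noteq> 0" using A0_ge1[of S t e] by simp
  have "((\<lambda>t. m S k t e) has_real_derivative
     (A S (Suc k) t e * A S 0 t e - A S k t e * A S (Suc 0) t e) / (A S 0 t e * A S 0 t e)) (at t)"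
    unfolding m_def by (rule DERIV_divide[OF A_deriv_t A_deriv_t p])
  then show ?thesis unfolding m_def
    by (rule DERIV_cong) (use p in \<open>simp add: field_simps\<close>)
qed

lemma m_deriv_e: "((\<lambda>e. m S k t e) has_real_derivative (m S (Suc (Suc k)) t e - m S k t e * m S 2 t e)) (at e)"
proof -
  have p: "A S 0 t e \<noteq> 0" using A0_ge1[of S t e] by simp
  have "((\<lambda>e. m S k t e) has_real_derivative
     (A S (Suc (Suc k)) t e * A S 0 t e - A S k t e * A S (Suc (Suc 0)) t e) / (A S 0 t e * A S 0 t e)) (at e)"
    unfolding m_def by (rule DERIV_divide[OF A_deriv_e A_deriv_e p])
  then show ?thesis unfolding m_def
    by (rule DERIV_cong) (use p in \<open>simp add: field_simps numeral_2_eq_2\<close>)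
qed



lemma pb: "\<bar>x\<bar> \<le> a \<Longrightarrow> \<bar>y\<bar> \<le> b \<Longrightarrow> \<bar>x*y\<bar> \<le> a*(b::real)"
  by (simp add: abs_mult mult_mono')

lemma E1_bound:
  fixes a1 a2 a3 a4 c :: real
  assumes "\<bar>a1\<bar> \<le> c" "\<bar>a2\<bar> \<le> c" "\<bar>a3\<bar> \<le> c" "\<bar>a4\<bar> \<le> c" "1 \<le> c"
  shows "\<bar>a4 - a3 * a1 - ((a3 - a2 * a1) * a1 + a2 * (a2 - a1 * a1))\<bar> \<le> 6 * c^3"
proof -
  have cc: "1 \<le> c*c" using mult_mono[of 1 c 1 c] assms(5) by simp
  have c2: "c \<le> c^3" "c*c \<le> c^3"
    using mult_left_mono[OF cc, of c] mult_left_mono[OF assms(5), of "c*c"] assms(5) by (auto simp: power3_eq_cube)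
  have b1: "\<bar>a3*a1\<bar> \<le> c*c" by (rule pb) (use assms in auto)
  have b2: "\<bar>a2*a2\<bar> \<le> c*c" by (rule pb) (use assms in auto)
  have b3: "\<bar>a2*a1*a1\<bar> \<le> c*c*c" by (intro pb) (use assms in auto)
  have e: "a4 - a3 * a1 - ((a3 - a2 * a1) * a1 + a2 * (a2 - a1 * a1)) = a4 - 2*(a3*a1) + 2*(a2*a1*a1) - a2*a2"
    by (simp add: algebra_simps)
  show ?thesis unfolding e using b1 b2 b3 c2 assms(4) cc by (simp add: abs_le_iff power3_eq_cube) (use zero_le_square[of a2] in linarith)
qed

lemma E2_bound:
  fixes a1 a2 a3 c :: real
  assumes "\<bar>a1\<bar> \<le> c" "\<bar>a2\<bar> \<le> c" "\<bar>a3\<bar> \<le> c" "1 \<le> c"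
  shows "\<bar>2 * (a2 - a1 * a1) * (a2 - a1 * a1) + 2 * a1 * ((a3 - a2 * a1) - 2 * a1 * (a2 - a1 * a1))\<bar> \<le> 20 * c^4"
proof -
  have cc: "1 \<le> c*c" using mult_mono[of 1 c 1 c] assms(4) by simp
  have c2: "c*c \<le> c^4" "c*c*c \<le> c^4"
    using mult_left_mono[OF cc, of "c*c"] mult_left_mono[OF assms(4), of "c*c*c"] assms(4) by (auto simp: power4_eq_xxxx mult.assoc)
  have b1: "\<bar>a2*a2\<bar> \<le> c*c" by (rule pb) (use assms in auto)
  have b2: "\<bar>a2*a1*a1\<bar> \<le> c*c*c" by (intro pb) (use assms in auto)
  have b3: "\<bar>a1*a1*a1*a1\<bar> \<le> c*c*c*c" by (intro pb) (use assms in auto)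
  have b4: "\<bar>a1*a3\<bar> \<le> c*c" by (rule pb) (use assms in auto)
  have e: "2 * (a2 - a1 * a1) * (a2 - a1 * a1) + 2 * a1 * ((a3 - a2 * a1) - 2 * a1 * (a2 - a1 * a1))
     = 2*(a2*a2) - 10*(a2*a1*a1) + 6*(a1*a1*a1*a1) + 2*(a1*a3)"
    by (simp add: algebra_simps)
  show ?thesis unfolding e using b1 b2 b3 b4 c2 cc by (simp add: abs_le_iff power4_eq_xxxx) (use zero_le_square[of a2] in linarith)
qed



lemma lip_deriv:
  fixes f f' :: "real \<Rightarrow> real"
  assumes d: "\<And>x. (f has_real_derivative f' x) (at x)" and b: "\<And>x. \<bar>f' x\<bar> \<le> B"
  shows "\<bar>f a - f c\<bar> \<le> B * \<bar>a - c\<bar>"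
proof -
  have *: "\<bar>f y - f x\<bar> \<le> B * \<bar>y - x\<bar>" if xy: "x < y" for x y
  proof -
    obtain z where "x < z" "z < y" "f y - f x = (y - x) * f' z"
      using MVT2[OF xy, of f f'] d by blast
    then show ?thesis using b[of z] xy by (simp add: abs_mult mult.commute mult_left_mono)
  qed
  show ?thesis
  proof (cases a c rule: linorder_cases)
    case less then show ?thesis using *[of a c] by (simp add: abs_minus_commute)
  next
    case equal then show ?thesis by simp
  next
    case greater then show ?thesis using *[of c a] by simp
  qed
qed

lemma R_bound:
  fixes g g' :: "real \<Rightarrow> real"
  assumes d: "\<And>x. (g has_real_derivative g' x) (at x)"
    and L: "\<And>a b. \<bar>g' a - g' b\<bar> \<le> M * \<bar>a - b\<bar>"
    and yy: "0 \<le> y * y'"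
  shows "\<bar>g (h + y) - g (h + y') - (y - y') * g' h\<bar> \<le> M * \<bar>y\<^sup>2 - y'\<^sup>2\<bar>"
proof -
  define R where "R z = g (h + z) - z * g' h" for z
  have dR: "(R has_real_derivative (g' (h + z) - g' h)) (at z)" for z
  proof -
    have "((\<lambda>z. g (h + z)) has_real_derivative g' (h + z) * 1) (at z)"
      by (rule DERIV_chain2[OF d]) (auto intro!: derivative_eq_intros)
    then show ?thesis unfolding R_def by (auto intro!: derivative_eq_intros)
  qed
  have M0: "0 \<le> M" using L[of 1 0] by simp
  have *: "\<bar>R b - R a\<bar> \<le> M * \<bar>b\<^sup>2 - a\<^sup>2\<bar>" if ab: "a < b" "0 \<le> a * b" for a b
  proof -
    obtain z where z: "a < z" "z < b" "R b - R a = (b - a) * (g' (h + z) - g' h)"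
      using MVT2[OF ab(1), of R "\<lambda>z. g' (h + z) - g' h"] dR by blast
    have "\<bar>z\<bar> \<le> \<bar>a + b\<bar>" using z ab by (cases "0 \<le> a") (auto simp: zero_le_mult_iff)
    have "\<bar>R b - R a\<bar> = (b - a) * \<bar>g' (h + z) - g' h\<bar>" using z ab by (simp add: abs_mult)
    also have "\<dots> \<le> (b - a) * (M * \<bar>z\<bar>)" using L[of "h+z" h] ab by (intro mult_left_mono) auto
    also have "\<dots> \<le> (b - a) * (M * \<bar>a + b\<bar>)"
      using \<open>\<bar>z\<bar> \<le> \<bar>a + b\<bar>\<close> ab M0 by (intro mult_left_mono) auto
    also have "\<dots> = M * \<bar>b\<^sup>2 - a\<^sup>2\<bar>"
    proof -
      have e1: "b\<^sup>2 - a\<^sup>2 = (b - a) * (a + b)" by (simp add: power2_eq_square algebra_simps)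
      have "\<bar>b\<^sup>2 - a\<^sup>2\<bar> = (b - a) * \<bar>a + b\<bar>" unfolding e1 using ab by (simp add: abs_mult)
      then show ?thesis by simp
    qed
    finally show ?thesis .
  qed
  have "\<bar>R y - R y'\<bar> \<le> M * \<bar>y\<^sup>2 - y'\<^sup>2\<bar>"
  proof (cases y y' rule: linorder_cases)
    case less then show ?thesis using *[of y y'] yy by (simp add: abs_minus_commute mult.commute)
  next
    case equal then show ?thesis by simp
  next
    case greater then show ?thesis using *[of y' y] yy by (simp add: mult.commute)
  qed
  then show ?thesis unfolding R_def by (simp add: algebra_simps)
qed

abbreviation phi :: "real \<Rightarrow> real" where "phi \<equiv> std_normal_density"

lemma int_phi_pow: "integrable lborel (\<lambda>x. phi x * x ^ k)"
  by (rule integrable_std_normal_moment)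

lemma gi:
  fixes u :: "real \<Rightarrow> real"
  assumes m: "u \<in> borel_measurable borel" and b: "\<And>x. \<bar>u x\<bar> \<le> B + C * x\<^sup>2"
  shows "integrable lborel (\<lambda>x. phi x * u x)"
proof (rule Bochner_Integration.integrable_bound[where f="\<lambda>x. B * (phi x * x ^ 0) + C * (phi x * x ^ 2)"])
  show "integrable lborel (\<lambda>x. B * (phi x * x ^ 0) + C * (phi x * x ^ 2))"
    by (intro Bochner_Integration.integrable_add Bochner_Integration.integrable_mult_right int_phi_pow)
  show "(\<lambda>x. phi x * u x) \<in> borel_measurable lborel" using m by measurable
  show "AE x in lborel. norm (phi x * u x) \<le> norm (B * (phi x * x ^ 0) + C * (phi x * x ^ 2))"
  proof (intro AE_I2)
    fix x
    have "norm (phi x * u x) = phi x * \<bar>u x\<bar>" by (simp add: abs_mult)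
    also have "\<dots> \<le> phi x * (B + C * x\<^sup>2)" by (intro mult_left_mono b) auto
    also have "\<dots> \<le> norm (B * (phi x * x ^ 0) + C * (phi x * x ^ 2))" by (simp add: algebra_simps)
    finally show "norm (phi x * u x) \<le> norm (B * (phi x * x ^ 0) + C * (phi x * x ^ 2))" .
  qed
qed

lemma int_phi_0: "(\<integral>x. phi x \<partial>lborel) = 1"
  using integral_std_normal_moment_even[of 0] by simp
lemma int_phi_1: "(\<integral>x. phi x * x \<partial>lborel) = 0"
  using integral_std_normal_moment_odd[of 0] by simp
lemma int_phi_2: "(\<integral>x. phi x * x\<^sup>2 \<partial>lborel) = 1"
  using integral_std_normal_moment_even[of 1] by simp

lemma gauss_bound:
  fixes u :: "real \<Rightarrow> real"
  assumes m: "u \<in> borel_measurable borel" and b: "\<And>x. \<bar>u x\<bar> \<le> B + C * x\<^sup>2"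
  shows "\<bar>gauss_exp u\<bar> \<le> B + C"
proof -
  have i2: "integrable lborel (\<lambda>x. B * phi x + C * (phi x * x\<^sup>2))"
  proof -
    have "integrable lborel phi" using int_phi_pow[of 0] by simp
    then show ?thesis using int_phi_pow[of 2] by (intro Bochner_Integration.integrable_add Bochner_Integration.integrable_mult_right) auto
  qed
  have "\<bar>gauss_exp u\<bar> \<le> (\<integral>x. B * phi x + C * (phi x * x\<^sup>2) \<partial>lborel)"
    unfolding gauss_exp_def
  proof (rule integral_abs_bound_integral[OF gi[OF m b] i2])
    fix x
    have "\<bar>phi x * u x\<bar> = phi x * \<bar>u x\<bar>" by (simp add: abs_mult)
    also have "\<dots> \<le> phi x * (B + C * x\<^sup>2)" by (intro mult_left_mono b) auto
    finally show "\<bar>phi x * u x\<bar> \<le> B * phi x + C * (phi x * x\<^sup>2)" by (simp add: algebra_simps)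
  qed
  also have "\<dots> = B + C"
    using int_phi_pow[of 0] int_phi_pow[of 2] int_phi_0 int_phi_2 by simp
  finally show ?thesis .
qed

lemma gauss_diff:
  fixes u w :: "real \<Rightarrow> real"
  assumes "integrable lborel (\<lambda>x. phi x * u x)" "integrable lborel (\<lambda>x. phi x * w x)"
  shows "gauss_exp u - gauss_exp w = gauss_exp (\<lambda>x. u x - w x)"
  unfolding gauss_exp_def using Bochner_Integration.integral_diff[OF assms] by (simp add: algebra_simps)

lemma key_e:
  fixes F :: "real \<Rightarrow> real \<Rightarrow> real"
  assumes m: "\<And>e. (\<lambda>x. F x e) \<in> borel_measurable borel"
    and bd: "\<And>x e. \<bar>F x e\<bar> \<le> B"
    and L: "\<And>x. \<bar>F x e - F x e'\<bar> \<le> L * \<bar>e - e'\<bar>"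
  shows "\<bar>gauss_exp (\<lambda>x. F x e) - gauss_exp (\<lambda>x. F x e')\<bar> \<le> L * \<bar>e - e'\<bar>"
proof -
  have b2: "\<bar>F x e\<bar> \<le> B + 0 * x\<^sup>2" for x e using bd by simp
  have "gauss_exp (\<lambda>x. F x e) - gauss_exp (\<lambda>x. F x e') = gauss_exp (\<lambda>x. F x e - F x e')"
    by (intro gauss_diff gi[OF m b2])
  also have "\<bar>\<dots>\<bar> \<le> L * \<bar>e - e'\<bar> + 0"
    by (rule gauss_bound) (use m L in auto)
  finally show ?thesis by simp
qed

lemma key_v:
  fixes g g' :: "real \<Rightarrow> real"
  assumes d: "\<And>x. (g has_real_derivative g' x) (at x)"
    and L: "\<And>a b. \<bar>g' a - g' b\<bar> \<le> M * \<bar>a - b\<bar>"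
    and bd: "\<And>x. \<bar>g x\<bar> \<le> B"
    and s: "0 \<le> s" "0 \<le> s'"
  shows "\<bar>gauss_exp (\<lambda>x. g (s * x + h)) - gauss_exp (\<lambda>x. g (s' * x + h))\<bar> \<le> M * \<bar>s\<^sup>2 - s'\<^sup>2\<bar>"
proof -
  have cg: "continuous_on UNIV g"
    using d by (intro continuous_at_imp_continuous_on) (auto intro: DERIV_isCont)
  have mg: "g \<in> borel_measurable borel" by (rule borel_measurable_continuous_onI[OF cg])
  have ma: "(\<lambda>x. g (a * x + h)) \<in> borel_measurable borel" for a
    using mg by measurable
  have b2: "\<bar>g (a * x + h)\<bar> \<le> B + 0 * x\<^sup>2" for a x using bd by simp
  define c where "c = (s - s') * g' h"
  define w where "w x = g (s * x + h) - g (s' * x + h) - c * x" for x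
  have mw: "w \<in> borel_measurable borel" unfolding w_def using ma by measurable
  have wb: "\<bar>w x\<bar> \<le> 0 + M * \<bar>s\<^sup>2 - s'\<^sup>2\<bar> * x\<^sup>2" for x
  proof -
    have "\<bar>w x\<bar> = \<bar>g (h + s * x) - g (h + s' * x) - (s * x - s' * x) * g' h\<bar>"
      unfolding w_def c_def by (simp add: algebra_simps)
    also have "\<dots> \<le> M * \<bar>(s * x)\<^sup>2 - (s' * x)\<^sup>2\<bar>"
      by (rule R_bound[OF d L]) (use s in \<open>simp add: algebra_simps\<close>)
    also have "\<dots> = M * \<bar>s\<^sup>2 - s'\<^sup>2\<bar> * x\<^sup>2"
    proof -
      have "(s * x)\<^sup>2 - (s' * x)\<^sup>2 = (s\<^sup>2 - s'\<^sup>2) * x\<^sup>2" by (simp add: power_mult_distrib algebra_simps)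
      then show ?thesis by (simp add: abs_mult)
    qed
    finally show ?thesis by simp
  qed
  have "gauss_exp (\<lambda>x. g (s * x + h)) - gauss_exp (\<lambda>x. g (s' * x + h)) =
        gauss_exp (\<lambda>x. g (s * x + h) - g (s' * x + h))"
    by (intro gauss_diff gi[OF ma b2])
  also have "\<dots> = gauss_exp w + c * (\<integral>x. phi x * x \<partial>lborel)"
  proof -
    have iw: "integrable lborel (\<lambda>x. phi x * w x)" by (rule gi[OF mw wb])
    have "(\<lambda>x. phi x * (g (s * x + h) - g (s' * x + h))) = (\<lambda>x. phi x * w x + c * (phi x * x))"
      unfolding w_def by (auto simp: algebra_simps)
    then show ?thesis unfolding gauss_exp_def
      using Bochner_Integration.integral_add[OF iw Bochner_Integration.integrable_mult_right[OF int_phi_pow[of 1]], of c] by simp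
  qed
  also have "\<dots> = gauss_exp w" by (simp add: int_phi_1)
  finally have e: "gauss_exp (\<lambda>x. g (s * x + h)) - gauss_exp (\<lambda>x. g (s' * x + h)) = gauss_exp w" .
  show ?thesis unfolding e using gauss_bound[OF mw wb] by simp
qed



definition f1 where "f1 S t e = m S 2 t e"
definition f1d where "f1d S t e = m S 3 t e - m S 2 t e * m S 1 t e"
definition f2 where "f2 S t e = (m S 1 t e)\<^sup>2"
definition f2d where "f2d S t e = 2 * m S 1 t e * (m S 2 t e - m S 1 t e * m S 1 t e)"

lemma mt: "((\<lambda>t. m S k t e) has_real_derivative (m S (Suc k) t e - m S k t e * m S 1 t e)) (at t)"
  by (rule m_deriv_t)

lemma f1_dt: "((\<lambda>t. f1 S t e) has_real_derivative f1d S t e) (at t)"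
  unfolding f1_def f1d_def using m_deriv_t[of S 2 e t] by (simp add: numeral_3_eq_3 numeral_2_eq_2)

lemma f2_dt: "((\<lambda>t. f2 S t e) has_real_derivative f2d S t e) (at t)"
proof -
  note d1 = m_deriv_t[where S=S and k=1 and t=t and e=e]
  show ?thesis unfolding f2_def f2d_def power2_eq_square
    by (rule DERIV_cong[OF DERIV_mult[OF d1 d1]]) (simp add: algebra_simps numeral_2_eq_2)
qed

lemma f1d_dt: "((\<lambda>t. f1d S t e) has_real_derivative
   (m S 4 t e - m S 3 t e * m S 1 t e - ((m S 3 t e - m S 2 t e * m S 1 t e) * m S 1 t e + m S 2 t e * (m S 2 t e - m S 1 t e * m S 1 t e)))) (at t)"
proof -
  note d1 = m_deriv_t[where S=S and k=1 and t=t and e=e]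
  note d2 = m_deriv_t[where S=S and k=2 and t=t and e=e]
  note d3 = m_deriv_t[where S=S and k=3 and t=t and e=e]
  show ?thesis unfolding f1d_def
    by (rule DERIV_cong[OF DERIV_diff[OF d3 DERIV_mult[OF d2 d1]]]) (simp add: algebra_simps eval_nat_numeral)
qed

lemma f2d_dt: "((\<lambda>t. f2d S t e) has_real_derivative
   (2 * (m S 2 t e - m S 1 t e * m S 1 t e) * (m S 2 t e - m S 1 t e * m S 1 t e) + 2 * m S 1 t e * ((m S 3 t e - m S 2 t e * m S 1 t e) - 2 * m S 1 t e * (m S 2 t e - m S 1 t e * m S 1 t e)))) (at t)"
proof -
  note d1 = m_deriv_t[where S=S and k=1 and t=t and e=e]
  note d2 = m_deriv_t[where S=S and k=2 and t=t and e=e]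
  show ?thesis unfolding f2d_def
    by (rule DERIV_cong[OF DERIV_mult[OF DERIV_cmult[OF d1] DERIV_diff[OF d2 DERIV_mult[OF d1 d1]]]])
      (simp add: algebra_simps eval_nat_numeral)
qed

lemma f1_de: "((\<lambda>e. f1 S t e) has_real_derivative (m S 4 t e - m S 2 t e * m S 2 t e)) (at e)"
  unfolding f1_def using m_deriv_e[where S=S and k=2 and t=t and e=e] by (simp add: eval_nat_numeral)

lemma f2_de: "((\<lambda>e. f2 S t e) has_real_derivative (2 * m S 1 t e * (m S 3 t e - m S 1 t e * m S 2 t e))) (at e)"
proof -
  note d1 = m_deriv_e[where S=S and k=1 and t=t and e=e]
  show ?thesis unfolding f2_def power2_eq_square
    by (rule DERIV_cong[OF DERIV_mult[OF d1 d1]]) (simp add: algebra_simps eval_nat_numeral)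
qed

lemma m_le_c: "1 \<le> S \<Longrightarrow> k \<le> 4 \<Longrightarrow> \<bar>m S k t e\<bar> \<le> real S ^ 4"
  using m_bound[of S k t e] power_increasing[of k 4 "real S"] by simp



lemma cpow: "1 \<le> (c::real) \<Longrightarrow> c \<le> c^4 \<and> c^2 \<le> c^4 \<and> c^3 \<le> c^4"
  using power_increasing[of 1 4 c] power_increasing[of 2 4 c] power_increasing[of 3 4 c] by simp

lemma f_bounds:
  assumes S: "1 \<le> S"
  defines "c \<equiv> real S ^ 4"
  shows "\<bar>f1 S t e\<bar> \<le> c" "\<bar>f2 S t e\<bar> \<le> c"
    "\<bar>f1d S a e - f1d S b e\<bar> \<le> 20 * c^4 * \<bar>a - b\<bar>"
    "\<bar>f2d S a e - f2d S b e\<bar> \<le> 20 * c^4 * \<bar>a - b\<bar>"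
    "\<bar>f1 S t e - f1 S t e'\<bar> \<le> 20 * c^4 * \<bar>e - e'\<bar>"
    "\<bar>f2 S t e - f2 S t e'\<bar> \<le> 20 * c^4 * \<bar>e - e'\<bar>"
proof -
  have c1: "1 \<le> c" unfolding c_def using S by simp
  note cp = cpow[OF c1]
  have mb: "\<bar>m S k t e\<bar> \<le> c" if "k \<le> 4" for k t e using m_le_c[OF S that] unfolding c_def .
  have S2: "real S ^ 2 \<le> c" unfolding c_def using S power_increasing[of 2 4 "real S"] by simp
  show "\<bar>f1 S t e\<bar> \<le> c" unfolding f1_def using m_bound[of S 2 t e] S2 by simp
  show "\<bar>f2 S t e\<bar> \<le> c"
  proof -
    have "\<bar>m S 1 t e\<bar>\<^sup>2 \<le> (real S)\<^sup>2" using m_bound[of S 1 t e] by (intro power_mono) auto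
    then show ?thesis unfolding f2_def using S2 by simp
  qed
  show "\<bar>f1d S a e - f1d S b e\<bar> \<le> 20 * c^4 * \<bar>a - b\<bar>"
  proof (rule lip_deriv[OF f1d_dt])
    fix x
    have "\<bar>m S 4 x e - m S 3 x e * m S 1 x e - ((m S 3 x e - m S 2 x e * m S 1 x e) * m S 1 x e + m S 2 x e * (m S 2 x e - m S 1 x e * m S 1 x e))\<bar> \<le> 6 * c^3"
      by (rule E1_bound) (use mb c1 in auto)
    also have "\<dots> \<le> 20 * c^4" using cp c1 by simp
    finally show "\<bar>m S 4 x e - m S 3 x e * m S 1 x e - ((m S 3 x e - m S 2 x e * m S 1 x e) * m S 1 x e + m S 2 x e * (m S 2 x e - m S 1 x e * m S 1 x e))\<bar> \<le> 20 * c^4" .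
  qed
  show "\<bar>f2d S a e - f2d S b e\<bar> \<le> 20 * c^4 * \<bar>a - b\<bar>"
    by (rule lip_deriv[OF f2d_dt], rule E2_bound) (use mb c1 in auto)
  show "\<bar>f1 S t e - f1 S t e'\<bar> \<le> 20 * c^4 * \<bar>e - e'\<bar>"
  proof (rule lip_deriv[OF f1_de])
    fix x
    have "\<bar>m S 4 t x - m S 2 t x * m S 2 t x\<bar> \<le> \<bar>m S 4 t x\<bar> + \<bar>m S 2 t x\<bar> * \<bar>m S 2 t x\<bar>"
      by (metis abs_mult abs_triangle_ineq4)
    also have "\<dots> \<le> c + c * c" using mb[of 4 t x] mb[of 2 t x] by (intro add_mono mult_mono) auto
    also have "\<dots> \<le> 20 * c^4"
    proof -
      from cp have "c \<le> c^4" "c*c \<le> c^4" by (auto simp: power2_eq_square)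
      then show ?thesis using c1 by linarith
    qed
    finally show "\<bar>m S 4 t x - m S 2 t x * m S 2 t x\<bar> \<le> 20 * c^4" .
  qed
  show "\<bar>f2 S t e - f2 S t e'\<bar> \<le> 20 * c^4 * \<bar>e - e'\<bar>"
  proof (rule lip_deriv[OF f2_de])
    fix x
    have "\<bar>2 * m S 1 t x * (m S 3 t x - m S 1 t x * m S 2 t x)\<bar> = 2 * \<bar>m S 1 t x\<bar> * \<bar>m S 3 t x - m S 1 t x * m S 2 t x\<bar>"
      by (simp add: abs_mult)
    also have "\<dots> \<le> 2 * c * (c + c * c)"
    proof -
      have "\<bar>m S 3 t x - m S 1 t x * m S 2 t x\<bar> \<le> \<bar>m S 3 t x\<bar> + \<bar>m S 1 t x\<bar> * \<bar>m S 2 t x\<bar>"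
        by (metis abs_mult abs_triangle_ineq4)
      also have "\<dots> \<le> c + c * c" using mb[of 3 t x] mb[of 1 t x] mb[of 2 t x] by (intro add_mono mult_mono) auto
      finally show ?thesis using mb[of 1 t x] c1 by (intro mult_mono) auto
    qed
    also have "\<dots> = 2 * c^2 + 2 * c^3" by (simp add: algebra_simps power2_eq_square power3_eq_cube)
    also have "\<dots> \<le> 20 * c^4" using cp c1 by linarith
    finally show "\<bar>2 * m S 1 t x * (m S 3 t x - m S 1 t x * m S 2 t x)\<bar> \<le> 20 * c^4" .
  qed
qed

lemma meas_comp:
  assumes "\<And>t. ((\<lambda>t. F t) has_real_derivative F' t) (at t)"
  shows "(\<lambda>x. F (s * x + h)) \<in> borel_measurable borel"
proof -
  have cg: "continuous_on UNIV F"
    using assms by (intro continuous_at_imp_continuous_on) (auto intro: DERIV_isCont)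
  have "F \<in> borel_measurable borel" by (rule borel_measurable_continuous_onI[OF cg])
  then show ?thesis by measurable
qed

lemma phi_lip:
  fixes F Fd :: "real \<Rightarrow> real \<Rightarrow> real"
  assumes d: "\<And>t e. ((\<lambda>t. F t e) has_real_derivative Fd t e) (at t)"
    and Ld: "\<And>a b e. \<bar>Fd a e - Fd b e\<bar> \<le> C * \<bar>a - b\<bar>"
    and bd: "\<And>t e. \<bar>F t e\<bar> \<le> B"
    and Le: "\<And>t e e'. \<bar>F t e - F t e'\<bar> \<le> C * \<bar>e - e'\<bar>"
    and s: "0 \<le> s" "0 \<le> s'"
  shows "\<bar>gauss_exp (\<lambda>x. F (s * x + h) e) - gauss_exp (\<lambda>x. F (s' * x + h) e')\<bar> \<le> C * \<bar>e - e'\<bar> + C * \<bar>s\<^sup>2 - s'\<^sup>2\<bar>"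
proof -
  have 1: "\<bar>gauss_exp (\<lambda>x. F (s * x + h) e) - gauss_exp (\<lambda>x. F (s * x + h) e')\<bar> \<le> C * \<bar>e - e'\<bar>"
    by (rule key_e[where F="\<lambda>x e. F (s * x + h) e"]) (use meas_comp[OF d] bd Le in auto)
  have 2: "\<bar>gauss_exp (\<lambda>x. F (s * x + h) e') - gauss_exp (\<lambda>x. F (s' * x + h) e')\<bar> \<le> C * \<bar>s\<^sup>2 - s'\<^sup>2\<bar>"
    by (rule key_v[where g="\<lambda>t. F t e'" and g'="\<lambda>t. Fd t e'"]) (use d Ld bd s in auto)
  show ?thesis using 1 2 by linarith
qed



lemma Zden_A: "Zden S D h b p q x = A S 0 (sqrt q * b * x + h) (D + b\<^sup>2 / 2 * (p - q))"
  unfolding Zden_def A_def wgt_def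
  by (simp, intro sum.cong refl) (simp add: cosh_def)

lemma Pnum_A: "Pnum S D h b p q x = A S 2 (sqrt q * b * x + h) (D + b\<^sup>2 / 2 * (p - q))"
  unfolding Pnum_def A_def wgt_def
  by (simp, intro sum.cong refl) (simp add: cosh_def)

lemma Qnum_A: "Qnum S D h b p q x = A S 1 (sqrt q * b * x + h) (D + b\<^sup>2 / 2 * (p - q))"
  unfolding Qnum_def A_def wgt_def
  by (simp, intro sum.cong refl) (simp add: sinh_def algebra_simps)

lemma sol_facts:
  assumes S: "1 \<le> S" and sol: "is_solution S D h b p q"
  shows "p = gauss_exp (\<lambda>x. f1 S ((sqrt q * b) * x + h) (D + b\<^sup>2 / 2 * (p - q)))"
    "q = gauss_exp (\<lambda>x. f2 S ((sqrt q * b) * x + h) (D + b\<^sup>2 / 2 * (p - q)))"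
    "0 \<le> q" "\<bar>p\<bar> \<le> real S ^ 4" "\<bar>q\<bar> \<le> real S ^ 4"
proof -
  show p: "p = gauss_exp (\<lambda>x. f1 S ((sqrt q * b) * x + h) (D + b\<^sup>2 / 2 * (p - q)))"
    using sol unfolding is_solution_def f1_def m_def Pnum_A Zden_A by simp
  show q: "q = gauss_exp (\<lambda>x. f2 S ((sqrt q * b) * x + h) (D + b\<^sup>2 / 2 * (p - q)))"
    using sol unfolding is_solution_def f2_def m_def Qnum_A Zden_A by simp
  show "0 \<le> q"
    by (subst q, unfold gauss_exp_def f2_def) (intro integral_nonneg_AE AE_I2, simp)
  have m1: "(\<lambda>x. f1 S ((sqrt q * b) * x + h) e) \<in> borel_measurable borel" for e
    by (rule meas_comp[OF f1_dt])
  have m2: "(\<lambda>x. f2 S ((sqrt q * b) * x + h) e) \<in> borel_measurable borel" for e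
    by (rule meas_comp[OF f2_dt])
  show "\<bar>p\<bar> \<le> real S ^ 4"
    using gauss_bound[OF m1[of "D + b\<^sup>2 / 2 * (p - q)"], where B="real S ^ 4" and C=0] f_bounds(1)[OF S] p by simp
  show "\<bar>q\<bar> \<le> real S ^ 4"
    using gauss_bound[OF m2[of "D + b\<^sup>2 / 2 * (p - q)"], where B="real S ^ 4" and C=0] f_bounds(2)[OF S] q by simp
qed

lemma final_alg:
  fixes dp dq ee ww C c B2 \<delta> :: real
  assumes a1: "dp \<le> C*ee + C*ww" and a2: "dq \<le> C*ee + C*ww"
    and a3: "ee \<le> (B2*(dp+dq) + 2*\<delta>*c)/2" and a4: "ww \<le> B2*dq + \<delta>*c"
    and "0 \<le> dp" "0 \<le> dq" "0 \<le> B2" and a8: "8*C*B2 \<le> 1" and "0 < C" "0 \<le> c" "0 \<le> \<delta>"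
  shows "dp + dq \<le> 8*C*c*\<delta>"
proof -
  define X where "X = C*B2*(dp+dq)"
  have 1: "C*ee \<le> X/2 + C*\<delta>*c"
  proof -
    have "C*ee \<le> C*((B2*(dp+dq) + 2*\<delta>*c)/2)" using a3 assms by (intro mult_left_mono) auto
    moreover have "C*((B2*(dp+dq) + 2*\<delta>*c)/2) = X/2 + C*\<delta>*c" unfolding X_def by (simp add: field_simps)
    ultimately show ?thesis by linarith
  qed
  have 2: "C*ww \<le> C*B2*dq + C*\<delta>*c"
  proof -
    have "C*ww \<le> C*(B2*dq + \<delta>*c)" using a4 assms by (intro mult_left_mono) auto
    then show ?thesis by (simp add: algebra_simps)
  qed
  have 3: "C*B2*dq \<le> X" unfolding X_def using assms by (intro mult_left_mono) auto
  have 4: "8*X \<le> dp+dq"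
  proof -
    have "8*X = (8*C*B2)*(dp+dq)" unfolding X_def by simp
    also have "\<dots> \<le> 1*(dp+dq)" using a8 assms by (intro mult_right_mono) auto
    finally show ?thesis by simp
  qed
  have 5: "0 \<le> C*\<delta>*c" using assms by simp
  have "dp + dq \<le> 3*X + 4*(C*\<delta>*c)" using a1 a2 1 2 3 by linarith
  then have "dp + dq \<le> 8*(C*\<delta>*c)" using 4 5 by linarith
  then show ?thesis by (simp add: ac_simps)
qed



lemma core:
  fixes S :: nat and N :: nat
  assumes S: "1 \<le> S"
  defines "c \<equiv> real S ^ 4"
  defines "C \<equiv> 20 * c ^ 4"
  assumes b0: "0 \<le> \<beta>" and bh: "\<beta> < 1 / (8 * C)" and N: "2 \<le> N"
    and sol1: "is_solution S D h \<beta> p q"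
    and sol2: "is_solution S D h (\<beta> * sqrt ((real N - 1) / real N)) pm qm"
  shows "\<bar>p - pm\<bar> \<le> 8 * C * c / real N \<and> \<bar>q - qm\<bar> \<le> 8 * C * c / real N"
proof -
  define bm where "bm = \<beta> * sqrt ((real N - 1) / real N)"
  have c1: "1 \<le> c" unfolding c_def using S by simp
  have C20: "20 \<le> C" unfolding C_def using c1 by simp
  have Npos: "0 < real N" using N by simp
  have bm0: "0 \<le> bm" unfolding bm_def using b0 N by simp
  define \<delta> where "\<delta> = \<beta>\<^sup>2 / real N"
  have bm2: "bm\<^sup>2 = \<beta>\<^sup>2 - \<delta>"
  proof -
    have "bm\<^sup>2 = \<beta>\<^sup>2 * ((real N - 1) / real N)"
      unfolding bm_def using N by (simp add: power_mult_distrib)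
    also have "\<dots> = \<beta>\<^sup>2 - \<delta>" unfolding \<delta>_def using Npos by (simp add: field_simps)
    finally show ?thesis .
  qed
  have b1: "\<beta> \<le> 1"
  proof -
    have "\<beta> * 1 \<le> \<beta> * (8 * C)" using b0 C20 by (intro mult_left_mono) auto
    moreover have "\<beta> * (8 * C) < 1" using bh C20 by (simp add: field_simps)
    ultimately show ?thesis by simp
  qed
  have B2le: "\<beta>\<^sup>2 \<le> \<beta>" using b0 b1 by (simp add: power2_eq_square mult_left_le)
  have B2le1: "\<beta>\<^sup>2 \<le> 1" using B2le b1 by linarith
  have d0: "0 \<le> \<delta>" unfolding \<delta>_def by simp
  have dle: "\<delta> \<le> 1 / real N" unfolding \<delta>_def using B2le1 Npos by (simp add: divide_right_mono)
  have CB: "8 * C * \<beta>\<^sup>2 \<le> 1"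
  proof -
    have "8 * C * \<beta>\<^sup>2 \<le> 8 * C * \<beta>" using B2le C20 by (intro mult_left_mono) auto
    also have "\<dots> \<le> 1" using bh C20 by (simp add: field_simps)
    finally show ?thesis .
  qed
  note s1 = sol_facts[OF S sol1]
  note s2 = sol_facts[OF S sol2[folded bm_def]]
  define s where "s = sqrt q * \<beta>"
  define sm where "sm = sqrt qm * bm"
  define e where "e = D + \<beta>\<^sup>2 / 2 * (p - q)"
  define em where "em = D + bm\<^sup>2 / 2 * (pm - qm)"
  have s0: "0 \<le> s" "0 \<le> sm" unfolding s_def sm_def using b0 bm0 s1(3) s2(3) by auto
  have ss: "s\<^sup>2 = \<beta>\<^sup>2 * q" "sm\<^sup>2 = bm\<^sup>2 * qm"
    unfolding s_def sm_def using s1(3) s2(3) by (auto simp: power_mult_distrib)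
  note fb = f_bounds[OF S, folded c_def, folded C_def]
  have P: "\<bar>p - pm\<bar> \<le> C * \<bar>e - em\<bar> + C * \<bar>s\<^sup>2 - sm\<^sup>2\<bar>"
  proof -
    have "p - pm = gauss_exp (\<lambda>x. f1 S (s * x + h) e) - gauss_exp (\<lambda>x. f1 S (sm * x + h) em)"
      using s1(1) s2(1) unfolding s_def sm_def e_def em_def by simp
    also have "\<bar>\<dots>\<bar> \<le> C * \<bar>e - em\<bar> + C * \<bar>s\<^sup>2 - sm\<^sup>2\<bar>"
      by (rule phi_lip[where Fd="f1d S"]) (use f1_dt fb s0 in auto)
    finally show ?thesis .
  qed
  have Q: "\<bar>q - qm\<bar> \<le> C * \<bar>e - em\<bar> + C * \<bar>s\<^sup>2 - sm\<^sup>2\<bar>"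
  proof -
    have "q - qm = gauss_exp (\<lambda>x. f2 S (s * x + h) e) - gauss_exp (\<lambda>x. f2 S (sm * x + h) em)"
      using s1(2) s2(2) unfolding s_def sm_def e_def em_def by simp
    also have "\<bar>\<dots>\<bar> \<le> C * \<bar>e - em\<bar> + C * \<bar>s\<^sup>2 - sm\<^sup>2\<bar>"
      by (rule phi_lip[where Fd="f2d S"]) (use f2_dt fb s0 in auto)
    finally show ?thesis .
  qed
  have pb: "\<bar>p\<bar> \<le> c" "\<bar>q\<bar> \<le> c" "\<bar>pm\<bar> \<le> c" "\<bar>qm\<bar> \<le> c"
    using s1(4,5) s2(4,5) unfolding c_def by auto
  have E: "\<bar>e - em\<bar> \<le> (\<beta>\<^sup>2 * (\<bar>p - pm\<bar> + \<bar>q - qm\<bar>) + 2 * \<delta> * c) / 2"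
  proof -
    have "e - em = (\<beta>\<^sup>2 * ((p - pm) - (q - qm)) + \<delta> * (pm - qm)) / 2"
      unfolding e_def em_def bm2 by (simp add: field_simps)
    also have "\<bar>\<dots>\<bar> \<le> (\<bar>\<beta>\<^sup>2 * ((p - pm) - (q - qm))\<bar> + \<bar>\<delta> * (pm - qm)\<bar>) / 2"
      by (simp add: divide_right_mono abs_triangle_ineq)
    also have "\<dots> \<le> (\<beta>\<^sup>2 * (\<bar>p - pm\<bar> + \<bar>q - qm\<bar>) + 2 * \<delta> * c) / 2"
    proof -
      have "\<bar>\<beta>\<^sup>2 * ((p - pm) - (q - qm))\<bar> \<le> \<beta>\<^sup>2 * (\<bar>p - pm\<bar> + \<bar>q - qm\<bar>)"
        by (simp add: abs_mult mult_left_mono abs_triangle_ineq4)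
      moreover have "\<bar>\<delta> * (pm - qm)\<bar> \<le> \<delta> * (2 * c)"
        using pb d0 by (simp add: abs_mult mult_left_mono abs_triangle_ineq4)
      ultimately show ?thesis by (simp add: divide_right_mono)
    qed
    finally show ?thesis .
  qed
  have V: "\<bar>s\<^sup>2 - sm\<^sup>2\<bar> \<le> \<beta>\<^sup>2 * \<bar>q - qm\<bar> + \<delta> * c"
  proof -
    have "s\<^sup>2 - sm\<^sup>2 = \<beta>\<^sup>2 * (q - qm) + \<delta> * qm"
      unfolding ss bm2 by (simp add: algebra_simps)
    also have "\<bar>\<dots>\<bar> \<le> \<bar>\<beta>\<^sup>2 * (q - qm)\<bar> + \<bar>\<delta> * qm\<bar>" by (rule abs_triangle_ineq)
    also have "\<dots> \<le> \<beta>\<^sup>2 * \<bar>q - qm\<bar> + \<delta> * c"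
      using pb d0 by (simp add: abs_mult mult_left_mono)
    finally show ?thesis .
  qed
  have F: "\<bar>p - pm\<bar> + \<bar>q - qm\<bar> \<le> 8 * C * c * \<delta>"
    by (rule final_alg[OF P Q E V]) (use CB C20 c1 d0 in auto)
  have "8 * C * c * \<delta> \<le> 8 * C * c * (1 / real N)"
    using dle C20 c1 by (intro mult_left_mono) auto
  then have G: "8 * C * c * \<delta> \<le> 8 * C * c / real N" by simp
  show ?thesis using F G abs_ge_zero[of "p - pm"] abs_ge_zero[of "q - qm"] by linarith
qed


theorem lemma6:
  fixes S :: nat
  assumes "S \<ge> 1"
  shows "\<exists>K>0. \<exists>\<beta>h>0. \<forall>\<beta> D h (N::nat) p q pm qm.
     0 \<le> \<beta> \<longrightarrow> \<beta> < \<beta>h \<longrightarrow> N \<ge> 2 \<longrightarrow>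
     is_solution S D h \<beta> p q \<longrightarrow>
     (\<forall>p' q'. is_solution S D h \<beta> p' q' \<longrightarrow> p' = p \<and> q' = q) \<longrightarrow>
     is_solution S D h (\<beta> * sqrt ((real N - 1) / real N)) pm qm \<longrightarrow>
     (\<forall>p' q'. is_solution S D h (\<beta> * sqrt ((real N - 1) / real N)) p' q' \<longrightarrow> p' = pm \<and> q' = qm) \<longrightarrow>
     \<bar>p - pm\<bar> \<le> K / real N \<and> \<bar>q - qm\<bar> \<le> K / real N"
proof -
  define c where "c = real S ^ 4"
  define C where "C = 20 * c ^ 4"
  have c1: "1 \<le> c" unfolding c_def using assms by simp
  have C20: "20 \<le> C" unfolding C_def using c1 by simp
  have K0: "0 < 8 * C * c" using c1 C20 by simp
  have b0: "0 < 1 / (8 * C)" using C20 by simp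
  have main: "\<forall>\<beta> D h (N::nat) p q pm qm.
     0 \<le> \<beta> \<longrightarrow> \<beta> < 1 / (8 * C) \<longrightarrow> N \<ge> 2 \<longrightarrow>
     is_solution S D h \<beta> p q \<longrightarrow>
     (\<forall>p' q'. is_solution S D h \<beta> p' q' \<longrightarrow> p' = p \<and> q' = q) \<longrightarrow>
     is_solution S D h (\<beta> * sqrt ((real N - 1) / real N)) pm qm \<longrightarrow>
     (\<forall>p' q'. is_solution S D h (\<beta> * sqrt ((real N - 1) / real N)) p' q' \<longrightarrow> p' = pm \<and> q' = qm) \<longrightarrow>
     \<bar>p - pm\<bar> \<le> 8 * C * c / real N \<and> \<bar>q - qm\<bar> \<le> 8 * C * c / real N"
  proof (intro allI impI)
    fix \<beta> D h N p q pm qm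
    assume "0 \<le> \<beta>" "\<beta> < 1 / (8 * C)" "(N::nat) \<ge> 2" "is_solution S D h \<beta> p q"
      "is_solution S D h (\<beta> * sqrt ((real N - 1) / real N)) pm qm"
    then show "\<bar>p - pm\<bar> \<le> 8 * C * c / real N \<and> \<bar>q - qm\<bar> \<le> 8 * C * c / real N"
      unfolding C_def c_def by (intro core[OF assms]) auto
  qed
  show ?thesis using K0 b0 main by blast
qed

end
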